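(* Let $G$ be a group and $O'\subset O$ two equipments of $G$ with $O$ finite, such that the elements of $O'$ generate $G$. Then $a_{(G,O)}\le a_{(G,O')}$; in particular, if $a_{(G,O')}=1$ then $a_{(G,O)}=1$.
   Context: An equipment of $G$ is a subset which is a union of finitely many conjugacy classes of $G$ and does not contain $1$. For an equipment $O$ generating $G$, let $\widehat G_O$ be the group with generators $y_g$ ($g\in O$) and relations $y_h^{-1}y_gy_h=y_{h^{-1}gh}$ for all $g,h\in O$, and $\beta:\widehat G_O\to G$, $y_g\mapsto g$, with kernel $H$ (central). The ambiguity index is $a_{(G,O)}=|H\cap[\widehat G_O,\widehat G_O]|$. *)

theory Defs
  imports "HOL-Algebra.Algebra" "HOL-Library.Extended_Nat"
begin

definition conj_class :: "('a, 'b) monoid_scheme \<Rightarrow> 'a \<Rightarrow> 'a set" where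
  "conj_class G x = {inv\<^bsub>G\<^esub> g \<otimes>\<^bsub>G\<^esub> x \<otimes>\<^bsub>G\<^esub> g | g. g \<in> carrier G}"

definition equipment :: "('a, 'b) monoid_scheme \<Rightarrow> 'a set \<Rightarrow> bool" where
  "equipment G E \<longleftrightarrow> E \<subseteq> carrier G \<and> \<one>\<^bsub>G\<^esub> \<notin> E \<and>
     (\<exists>S. finite S \<and> S \<subseteq> carrier G \<and> E = (\<Union>x\<in>S. conj_class G x))"

(* Words in the generators y_g (g \<in> E): a letter (g, True) stands for y_g,
   (g, False) for y_g^{-1}.  hrel is the congruence defining the presented group. *)
inductive_set hrel :: "('a, 'b) monoid_scheme \<Rightarrow> 'a set \<Rightarrow>
    ((('a \<times> bool) list) \<times> (('a \<times> bool) list)) set"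
  for G :: "('a, 'b) monoid_scheme" and E :: "'a set" where
  hrefl: "w \<in> lists (E \<times> UNIV) \<Longrightarrow> (w, w) \<in> hrel G E"
| hsym: "(u, v) \<in> hrel G E \<Longrightarrow> (v, u) \<in> hrel G E"
| htrans: "(u, v) \<in> hrel G E \<Longrightarrow> (v, w) \<in> hrel G E \<Longrightarrow> (u, w) \<in> hrel G E"
| hctx: "(u, v) \<in> hrel G E \<Longrightarrow> a \<in> lists (E \<times> UNIV) \<Longrightarrow> b \<in> lists (E \<times> UNIV)
          \<Longrightarrow> (a @ u @ b, a @ v @ b) \<in> hrel G E"
| hcancel: "g \<in> E \<Longrightarrow> ([(g, e), (g, \<not> e)], []) \<in> hrel G E"
| hconj: "g \<in> E \<Longrightarrow> h \<in> E \<Longrightarrow>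
          ([(h, False), (g, True), (h, True)], [(inv\<^bsub>G\<^esub> h \<otimes>\<^bsub>G\<^esub> g \<otimes>\<^bsub>G\<^esub> h, True)]) \<in> hrel G E"

(* the group hat(G)_E = < y_g (g \<in> E) | y_h^{-1} y_g y_h = y_{h^{-1} g h} > *)
definition hatG :: "('a, 'b) monoid_scheme \<Rightarrow> 'a set \<Rightarrow> (('a \<times> bool) list set) monoid" where
  "hatG G E = \<lparr> carrier = lists (E \<times> UNIV) // hrel G E,
      monoid.mult = (\<lambda>A B. hrel G E `` ((\<lambda>(x, y). x @ y) ` (A \<times> B))),
      monoid.one = hrel G E `` {[]} \<rparr>"

definition word_eval :: "('a, 'b) monoid_scheme \<Rightarrow> ('a \<times> bool) list \<Rightarrow> 'a" where
  "word_eval G w = foldr (\<lambda>(g, e) acc. (if e then g else inv\<^bsub>G\<^esub> g) \<otimes>\<^bsub>G\<^esub> acc) w \<one>\<^bsub>G\<^esub>"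

definition hat_beta :: "('a, 'b) monoid_scheme \<Rightarrow> ('a \<times> bool) list set \<Rightarrow> 'a" where
  "hat_beta G A = word_eval G (SOME w. w \<in> A)"

definition hat_kernel :: "('a, 'b) monoid_scheme \<Rightarrow> 'a set \<Rightarrow> ('a \<times> bool) list set set" where
  "hat_kernel G E = {A \<in> carrier (hatG G E). hat_beta G A = \<one>\<^bsub>G\<^esub>}"

definition ambiguity_index :: "('a, 'b) monoid_scheme \<Rightarrow> 'a set \<Rightarrow> enat" where
  "ambiguity_index G E =
     (let S = hat_kernel G E \<inter> derived (hatG G E) (carrier (hatG G E))
      in if finite S then enat (card S) else \<infinity>)"

end

theory Submission
  imports Defs
begin

lemma word_eval_Nil[simp]: "word_eval G [] = \<one>\<^bsub>G\<^esub>"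
  by (simp add: word_eval_def)
lemma word_eval_Cons[simp]: "word_eval G ((g,e)#w) = (if e then g else inv\<^bsub>G\<^esub> g) \<otimes>\<^bsub>G\<^esub> word_eval G w"
  by (simp add: word_eval_def)

lemma (in group) word_eval_closed:
  "w \<in> lists (carrier G \<times> UNIV) \<Longrightarrow> word_eval G w \<in> carrier G"
  by (induction w) auto

lemma (in group) word_eval_append:
  "a \<in> lists (carrier G \<times> UNIV) \<Longrightarrow> b \<in> lists (carrier G \<times> UNIV) \<Longrightarrow>
   word_eval G (a @ b) = word_eval G a \<otimes> word_eval G b"
  by (induction a) (auto simp: m_assoc word_eval_closed in_lists_conv_set)

definition winv :: "('a \<times> bool) list \<Rightarrow> ('a \<times> bool) list" where
  "winv w = rev (map (\<lambda>(g,e). (g, \<not> e)) w)"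

lemma (in group) conj_lemma: "b \<in> carrier G \<Longrightarrow> c \<in> carrier G \<Longrightarrow> inv b \<otimes> c \<otimes> b = d \<Longrightarrow> c \<otimes> b = b \<otimes> d"
  by (metis group.inv_closed inv_solve_left is_group m_assoc m_closed)

lemma (in group) comm_inv: "a \<in> carrier G \<Longrightarrow> t \<in> carrier G \<Longrightarrow> a \<otimes> t = t \<otimes> a \<Longrightarrow> inv a \<otimes> t = t \<otimes> inv a"
  by (metis m_assoc inv_solve_left inv_solve_right m_closed inv_closed)

lemma (in group) r_inv_assoc: "x \<in> carrier G \<Longrightarrow> y \<in> carrier G \<Longrightarrow> x \<otimes> (inv x \<otimes> y) = y"
  by (simp add: m_assoc[symmetric])

lemma (in group) l_inv_assoc: "x \<in> carrier G \<Longrightarrow> y \<in> carrier G \<Longrightarrow> inv x \<otimes> (x \<otimes> y) = y"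
  by (simp add: m_assoc[symmetric])

lemma (in group) comm_central:
  assumes a: "a \<in> carrier G" and y: "y \<in> carrier G" and z: "z \<in> carrier G"
    and c: "\<forall>x\<in>carrier G. z \<otimes> x = x \<otimes> z"
  shows "(a \<otimes> z) \<otimes> y \<otimes> inv (a \<otimes> z) \<otimes> inv y = a \<otimes> y \<otimes> inv a \<otimes> inv y"
proof -
  have zy: "z \<otimes> y = y \<otimes> z" using c y by blast
  have "(a \<otimes> z) \<otimes> y \<otimes> inv (a \<otimes> z) \<otimes> inv y = a \<otimes> (z \<otimes> y) \<otimes> (inv z \<otimes> inv a) \<otimes> inv y"
    using a y z by (simp add: inv_mult_group m_assoc)
  also have "\<dots> = a \<otimes> y \<otimes> (z \<otimes> inv z) \<otimes> inv a \<otimes> inv y"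
    unfolding zy using a y z by (simp add: m_assoc r_inv_assoc)
  also have "\<dots> = a \<otimes> y \<otimes> inv a \<otimes> inv y" using a y z by simp
  finally show ?thesis .
qed

lemma (in group) comm_central2:
  assumes a: "a \<in> carrier G" and y: "y \<in> carrier G" and z: "z \<in> carrier G"
    and c: "\<forall>x\<in>carrier G. z \<otimes> x = x \<otimes> z"
  shows "y \<otimes> (a \<otimes> z) \<otimes> inv y \<otimes> inv (a \<otimes> z) = y \<otimes> a \<otimes> inv y \<otimes> inv a"
proof -
  have zy: "z \<otimes> inv y = inv y \<otimes> z" using c y by blast
  have "y \<otimes> (a \<otimes> z) \<otimes> inv y \<otimes> inv (a \<otimes> z) = y \<otimes> a \<otimes> (z \<otimes> inv y) \<otimes> (inv z \<otimes> inv a)"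
    using a y z by (simp add: inv_mult_group m_assoc)
  also have "\<dots> = y \<otimes> a \<otimes> inv y \<otimes> (z \<otimes> inv z) \<otimes> inv a"
    unfolding zy using a y z by (simp add: m_assoc r_inv_assoc)
  also have "\<dots> = y \<otimes> a \<otimes> inv y \<otimes> inv a" using a y z by simp
  finally show ?thesis .
qed

locale eqp = group G for G :: "('a,'b) monoid_scheme" (structure) +
  fixes E :: "'a set"
  assumes Esub: "E \<subseteq> carrier G"
    and Econj: "\<And>g h. g \<in> E \<Longrightarrow> h \<in> carrier G \<Longrightarrow> inv\<^bsub>G\<^esub> h \<otimes>\<^bsub>G\<^esub> g \<otimes>\<^bsub>G\<^esub> h \<in> E"
begin

abbreviation "W \<equiv> lists (E \<times> (UNIV::bool set))"
abbreviation "R \<equiv> hrel G E"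
abbreviation "HG \<equiv> hatG G E"
definition cls where "cls w = R `` {w}"

lemma W_carrier: "w \<in> W \<Longrightarrow> w \<in> lists (carrier G \<times> UNIV)"
  using Esub by auto

lemma R_W: "(u,v) \<in> R \<Longrightarrow> u \<in> W \<and> v \<in> W"
proof (induction rule: hrel.induct)
  case (hconj g h)
  then show ?case using Econj[of g h] Esub by auto
qed auto

lemma R_refl: "w \<in> W \<Longrightarrow> (w,w) \<in> R" by (rule hrel.hrefl)

lemma R_equiv: "equiv W R"
proof (rule equivI)
  show "R \<subseteq> W \<times> W" by (rule subrelI) (auto dest: R_W)
  show "refl_on W R" unfolding refl_on_def by (auto intro: R_refl)
  show "sym R" unfolding sym_def by (blast intro: hrel.hsym)
  show "trans R" unfolding trans_def by (blast intro: hrel.htrans)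
qed

lemma R_eval: "(u,v) \<in> R \<Longrightarrow> word_eval G u = word_eval G v"
proof (induction rule: hrel.induct)
  case (hctx u v a b)
  then show ?case using R_W[OF hctx(1)] W_carrier
    by (simp add: word_eval_append)
next
  case (hconj g h)
  then have "g \<in> carrier G" "h \<in> carrier G" using Esub by auto
  then show ?case by (simp add: m_assoc)
next
  case (hcancel g e)
  then show ?case using Esub by auto
qed auto

lemma R_app: "(u,v) \<in> R \<Longrightarrow> (u',v') \<in> R \<Longrightarrow> (u@u', v@v') \<in> R"
proof -
  assume a: "(u,v) \<in> R" and b: "(u',v') \<in> R"
  have "([] @ u @ u', [] @ v @ u') \<in> R" using a R_W[OF b] by (intro hrel.hctx) auto
  moreover have "(v @ u' @ [], v @ v' @ []) \<in> R" using b R_W[OF a] by (intro hrel.hctx) auto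
  ultimately show ?thesis by (auto intro: hrel.htrans)
qed

lemma cls_carrier: "w \<in> W \<Longrightarrow> cls w \<in> carrier HG"
  unfolding cls_def hatG_def by (auto intro: quotientI)

lemma carrier_cls: "A \<in> carrier HG \<Longrightarrow> \<exists>w\<in>W. A = cls w"
  unfolding cls_def hatG_def by (auto elim: quotientE)

lemma cls_eq: "u \<in> W \<Longrightarrow> cls u = cls v \<longleftrightarrow> (u,v) \<in> R"
proof
  assume u: "u \<in> W" and "cls u = cls v"
  then have "u \<in> cls v" using R_refl by (auto simp: cls_def)
  then show "(u,v) \<in> R" by (auto simp: cls_def intro: hrel.hsym)
next
  assume "(u,v) \<in> R" then show "cls u = cls v"
    unfolding cls_def by (rule equiv_class_eq[OF R_equiv])
qed

lemma cls_mult: "u \<in> W \<Longrightarrow> v \<in> W \<Longrightarrow> cls u \<otimes>\<^bsub>HG\<^esub> cls v = cls (u @ v)"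
proof -
  assume u: "u \<in> W" and v: "v \<in> W"
  have "R `` ((\<lambda>(x, y). x @ y) ` (cls u \<times> cls v)) = R `` {u @ v}"
  proof (intro equalityI subsetI)
    fix z assume "z \<in> R `` ((\<lambda>(x, y). x @ y) ` (cls u \<times> cls v))"
    then obtain x y where "(u,x) \<in> R" "(v,y) \<in> R" "(x@y, z) \<in> R"
      unfolding cls_def by auto
    then show "z \<in> R `` {u @ v}" by (auto intro: R_app hrel.htrans)
  next
    fix z assume "z \<in> R `` {u @ v}"
    moreover have "u \<in> cls u" "v \<in> cls v" using u v R_refl by (auto simp: cls_def)
    ultimately show "z \<in> R `` ((\<lambda>(x, y). x @ y) ` (cls u \<times> cls v))" by blast
  qed
  then show ?thesis unfolding hatG_def cls_def by simp
qed

lemma cls_one: "\<one>\<^bsub>HG\<^esub> = cls []"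
  unfolding hatG_def cls_def by simp

lemma winv_W: "w \<in> W \<Longrightarrow> winv w \<in> W"
  unfolding winv_def by auto

lemma winv_cancel: "w \<in> W \<Longrightarrow> (winv w @ w, []) \<in> R"
proof (induction w)
  case Nil then show ?case by (simp add: winv_def R_refl)
next
  case (Cons x w)
  obtain g e where x: "x = (g,e)" by (cases x)
  have g: "g \<in> E" and w: "w \<in> W" using Cons x by auto
  have "winv (x#w) @ x # w = winv w @ [(g, \<not> e), (g, e)] @ w" by (simp add: winv_def x)
  moreover have "(winv w @ [(g, \<not> e), (g, e)] @ w, winv w @ [] @ w) \<in> R"
    using hrel.hcancel[OF g, of "\<not> e"] winv_W[OF w] w by (intro hrel.hctx) auto
  ultimately show ?case using Cons w by (auto intro: hrel.htrans)
qed

lemma hat_group: "group HG"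
proof (rule groupI)
  fix x y assume "x \<in> carrier HG" "y \<in> carrier HG"
  then obtain a b where "a \<in> W" "b \<in> W" "x = cls a" "y = cls b"
    using carrier_cls by meson
  then show "x \<otimes>\<^bsub>HG\<^esub> y \<in> carrier HG"
    by (simp add: cls_mult cls_carrier)
next
  show "\<one>\<^bsub>HG\<^esub> \<in> carrier HG" using cls_one cls_carrier by simp
next
  fix x y z assume "x \<in> carrier HG" "y \<in> carrier HG" "z \<in> carrier HG"
  then obtain a b c where "a \<in> W" "b \<in> W" "c \<in> W" "x = cls a" "y = cls b" "z = cls c"
    using carrier_cls by meson
  then show "x \<otimes>\<^bsub>HG\<^esub> y \<otimes>\<^bsub>HG\<^esub> z = x \<otimes>\<^bsub>HG\<^esub> (y \<otimes>\<^bsub>HG\<^esub> z)"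
    by (simp add: cls_mult)
next
  fix x assume "x \<in> carrier HG"
  then obtain a where "a \<in> W" "x = cls a"
    using carrier_cls by meson
  then show "\<one>\<^bsub>HG\<^esub> \<otimes>\<^bsub>HG\<^esub> x = x"
    by (simp add: cls_mult cls_one)
next
  fix x assume "x \<in> carrier HG"
  then obtain w where w: "w \<in> W" "x = cls w" using carrier_cls by blast
  have "cls (winv w) \<otimes>\<^bsub>HG\<^esub> x = cls (winv w @ w)"
    using w winv_W cls_mult by simp
  also have "\<dots> = \<one>\<^bsub>HG\<^esub>"
    using w winv_W winv_cancel cls_one cls_eq by simp
  finally have "cls (winv w) \<otimes>\<^bsub>HG\<^esub> x = \<one>\<^bsub>HG\<^esub>" .
  then show "\<exists>y\<in>carrier HG. y \<otimes>\<^bsub>HG\<^esub> x = \<one>\<^bsub>HG\<^esub>" using cls_carrier winv_W w by blast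
qed

end

sublocale eqp \<subseteq> hat: group "hatG G E" by (rule hat_group)

context eqp begin

abbreviation Y where "Y g \<equiv> cls [(g, True)]"

lemma cls_Cons: "x \<in> E \<times> UNIV \<Longrightarrow> w \<in> W \<Longrightarrow> cls (x # w) = cls [x] \<otimes>\<^bsub>HG\<^esub> cls w"
  using cls_mult[of "[x]" w] by simp

lemma Y_carrier: "g \<in> E \<Longrightarrow> Y g \<in> carrier HG" by (simp add: cls_carrier)

lemma Y_inv: "g \<in> E \<Longrightarrow> cls [(g, False)] = inv\<^bsub>HG\<^esub> Y g"
proof -
  assume g: "g \<in> E"
  have "cls [(g, False)] \<otimes>\<^bsub>HG\<^esub> Y g = cls [(g,False),(g,True)]"
    using g cls_mult[of "[(g,False)]" "[(g,True)]"] by simp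
  also have "\<dots> = \<one>\<^bsub>HG\<^esub>" using g hrel.hcancel[where g=g and e=False] cls_eq cls_one by simp
  finally show ?thesis using g by (intro hat.inv_equality[symmetric]) (auto simp: cls_carrier)
qed

lemma Y_conj: "g \<in> E \<Longrightarrow> h \<in> E \<Longrightarrow> Y g \<otimes>\<^bsub>HG\<^esub> Y h = Y h \<otimes>\<^bsub>HG\<^esub> Y (inv h \<otimes> g \<otimes> h)"
proof -
  assume g: "g \<in> E" and h: "h \<in> E"
  have "cls [(h, False), (g, True), (h, True)] = cls [(inv h \<otimes> g \<otimes> h, True)]"
    using hrel.hconj[OF g h] cls_eq g h by simp
  moreover have "cls [(h, False), (g, True), (h, True)] = inv\<^bsub>HG\<^esub> Y h \<otimes>\<^bsub>HG\<^esub> Y g \<otimes>\<^bsub>HG\<^esub> Y h"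
    using g h cls_Cons[of "(h,False)" "[(g, True), (h, True)]"] cls_Cons[of "(g,True)" "[(h, True)]"]
    by (simp add: Y_inv hat.m_assoc cls_carrier)
  ultimately show ?thesis using g h by (intro hat.conj_lemma) (auto simp: cls_carrier)
qed

lemma key: "t \<in> W \<Longrightarrow> g \<in> E \<Longrightarrow>
  Y g \<otimes>\<^bsub>HG\<^esub> cls t = cls t \<otimes>\<^bsub>HG\<^esub> Y (inv (word_eval G t) \<otimes> g \<otimes> word_eval G t)"
proof (induction t arbitrary: g)
  case Nil
  then have "g \<in> carrier G" using Esub by auto
  then show ?case using Nil by (simp add: cls_one[symmetric] cls_carrier)
next
  case (Cons x t)
  obtain h e where x: "x = (h, e)" by (cases x)
  have h: "h \<in> E" and t: "t \<in> W" using Cons.prems x by auto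
  have hc: "h \<in> carrier G" and gc: "g \<in> carrier G" using h Cons.prems Esub by auto
  have ec: "word_eval G t \<in> carrier G" using t W_carrier word_eval_closed by blast
  let ?e = "word_eval G t"
  show ?case
  proof (cases e)
    case True
    let ?g' = "inv h \<otimes> g \<otimes> h"
    have g': "?g' \<in> E" using Econj Cons.prems hc by blast
    have "Y g \<otimes>\<^bsub>HG\<^esub> cls (x # t) = Y g \<otimes>\<^bsub>HG\<^esub> Y h \<otimes>\<^bsub>HG\<^esub> cls t"
      using cls_Cons[of x t] x True h t Cons.prems by (simp add: hat.m_assoc cls_carrier)
    also have "\<dots> = Y h \<otimes>\<^bsub>HG\<^esub> (Y ?g' \<otimes>\<^bsub>HG\<^esub> cls t)"
      using Y_conj[OF Cons.prems(2) h] h g' t by (simp add: hat.m_assoc cls_carrier)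
    also have "\<dots> = Y h \<otimes>\<^bsub>HG\<^esub> (cls t \<otimes>\<^bsub>HG\<^esub> Y (inv ?e \<otimes> ?g' \<otimes> ?e))"
      using Cons.IH[OF t g'] by simp
    also have "\<dots> = cls (x # t) \<otimes>\<^bsub>HG\<^esub> Y (inv ?e \<otimes> ?g' \<otimes> ?e)"
      using cls_Cons[of x t] x True h t g' Econj ec by (simp add: hat.m_assoc cls_carrier)
    also have "inv ?e \<otimes> ?g' \<otimes> ?e = inv (word_eval G (x#t)) \<otimes> g \<otimes> word_eval G (x#t)"
      using x True hc gc ec by (simp add: inv_mult_group m_assoc)
    finally show ?thesis .
  next
    case False
    let ?g' = "h \<otimes> g \<otimes> inv h"
    have g': "?g' \<in> E" using Econj[OF Cons.prems(2), of "inv h"] hc by simp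
    have "Y ?g' \<otimes>\<^bsub>HG\<^esub> Y h = Y h \<otimes>\<^bsub>HG\<^esub> Y (inv h \<otimes> ?g' \<otimes> h)"
      by (rule Y_conj[OF g' h])
    also have "inv h \<otimes> ?g' \<otimes> h = g" using hc gc by (simp add: m_assoc l_inv_assoc)
    finally have yc: "Y ?g' \<otimes>\<^bsub>HG\<^esub> Y h = Y h \<otimes>\<^bsub>HG\<^esub> Y g" .
    have yc2: "Y g \<otimes>\<^bsub>HG\<^esub> inv\<^bsub>HG\<^esub> Y h = inv\<^bsub>HG\<^esub> Y h \<otimes>\<^bsub>HG\<^esub> Y ?g'"
      using yc h g' Cons.prems
      by (metis Y_carrier hat.inv_closed hat.inv_solve_left hat.inv_solve_right hat.m_assoc hat.m_closed)
    have "Y g \<otimes>\<^bsub>HG\<^esub> cls (x # t) = Y g \<otimes>\<^bsub>HG\<^esub> inv\<^bsub>HG\<^esub> Y h \<otimes>\<^bsub>HG\<^esub> cls t"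
      using cls_Cons[of x t] x False h t Cons.prems by (simp add: hat.m_assoc cls_carrier Y_inv)
    also have "\<dots> = inv\<^bsub>HG\<^esub> Y h \<otimes>\<^bsub>HG\<^esub> (Y ?g' \<otimes>\<^bsub>HG\<^esub> cls t)"
      using yc2 h g' t by (simp add: hat.m_assoc cls_carrier)
    also have "\<dots> = inv\<^bsub>HG\<^esub> Y h \<otimes>\<^bsub>HG\<^esub> (cls t \<otimes>\<^bsub>HG\<^esub> Y (inv ?e \<otimes> ?g' \<otimes> ?e))"
      using Cons.IH[OF t g'] by simp
    also have "\<dots> = cls (x # t) \<otimes>\<^bsub>HG\<^esub> Y (inv ?e \<otimes> ?g' \<otimes> ?e)"
      using cls_Cons[of x t] x False h t g' Econj ec by (simp add: hat.m_assoc cls_carrier Y_inv)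
    also have "inv ?e \<otimes> ?g' \<otimes> ?e = inv (word_eval G (x#t)) \<otimes> g \<otimes> word_eval G (x#t)"
      using x False hc gc ec by (simp add: inv_mult_group m_assoc)
    finally show ?thesis .
  qed
qed

lemma central_word_aux:
  assumes t: "t \<in> W" and ev: "word_eval G t = \<one>"
  shows "w \<in> W \<Longrightarrow> cls t \<otimes>\<^bsub>HG\<^esub> cls w = cls w \<otimes>\<^bsub>HG\<^esub> cls t"
proof (induction w)
  have tc: "cls t \<in> carrier HG" using t cls_carrier by simp
  case Nil then show ?case using tc by (simp add: cls_one[symmetric])
next
  case (Cons x w)
  have tc: "cls t \<in> carrier HG" using t cls_carrier by simp
  obtain g e where x: "x = (g, e)" by (cases x)
  have g: "g \<in> E" and ww: "w \<in> W" using Cons.prems x by auto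
  have gc: "g \<in> carrier G" using g Esub by auto
  have c1: "Y g \<otimes>\<^bsub>HG\<^esub> cls t = cls t \<otimes>\<^bsub>HG\<^esub> Y g"
    using key[OF t g] ev gc by simp
  have c2: "cls [x] \<otimes>\<^bsub>HG\<^esub> cls t = cls t \<otimes>\<^bsub>HG\<^esub> cls [x]"
  proof (cases e)
    case True then show ?thesis using c1 x by simp
  next
    case False then show ?thesis using c1 x g tc
      by (simp add: Y_inv hat.comm_inv Y_carrier)
  qed
  have xc: "cls [x] \<in> carrier HG" using g x cls_carrier by simp
  have wc: "cls w \<in> carrier HG" using ww cls_carrier by simp
  have "cls t \<otimes>\<^bsub>HG\<^esub> cls (x # w) = cls t \<otimes>\<^bsub>HG\<^esub> cls [x] \<otimes>\<^bsub>HG\<^esub> cls w"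
    using cls_Cons[of x w] x g ww xc wc tc by (simp add: hat.m_assoc)
  also have "\<dots> = cls [x] \<otimes>\<^bsub>HG\<^esub> (cls t \<otimes>\<^bsub>HG\<^esub> cls w)"
    using c2 xc wc tc by (simp add: hat.m_assoc[symmetric])
  also have "\<dots> = cls (x # w) \<otimes>\<^bsub>HG\<^esub> cls t"
    using Cons.IH[OF ww] cls_Cons[of x w] x g ww xc wc tc by (simp add: hat.m_assoc)
  finally show ?case .
qed

lemma central_word:
  assumes t: "t \<in> W" and ev: "word_eval G t = \<one>"
  shows "\<forall>x\<in>carrier HG. cls t \<otimes>\<^bsub>HG\<^esub> x = x \<otimes>\<^bsub>HG\<^esub> cls t"
  using central_word_aux[OF t ev] carrier_cls by blast

lemma beta_cls: "w \<in> W \<Longrightarrow> hat_beta G (cls w) = word_eval G w"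
proof -
  assume w: "w \<in> W"
  have "w \<in> cls w" using w R_refl by (simp add: cls_def)
  then have "(SOME v. v \<in> cls w) \<in> cls w" by (rule someI)
  then have "(w, SOME v. v \<in> cls w) \<in> R" by (simp add: cls_def)
  then show ?thesis unfolding hat_beta_def using R_eval by metis
qed

end


lemma winv_winv[simp]: "winv (winv w) = w"
  by (simp add: winv_def rev_map comp_def case_prod_beta)

lemma (in eqp) eval_winv_app:
  assumes v: "v \<in> W" and w: "w \<in> W" and e: "word_eval G v = word_eval G w"
  shows "word_eval G (winv v @ w) = \<one>"
proof -
  have vw: "winv v \<in> W" using v winv_W by blast
  have c: "word_eval G (winv v) \<in> carrier G" "word_eval G v \<in> carrier G"
    using vw v W_carrier word_eval_closed by blast+
  have "word_eval G (winv v @ v) = \<one>" using R_eval[OF winv_cancel[OF v]] by simp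
  then have "word_eval G (winv v) \<otimes> word_eval G v = \<one>"
    using word_eval_append W_carrier vw v by simp
  then have "inv (word_eval G v) = word_eval G (winv v)" using c by (simp add: inv_equality)
  then show ?thesis using word_eval_append W_carrier vw w e c by (metis l_inv)
qed

lemma (in group) equipment_eqp:
  assumes "equipment G E" shows "eqp G E"
proof
  from assms obtain S where S: "S \<subseteq> carrier G" "E = (\<Union>x\<in>S. conj_class G x)" "E \<subseteq> carrier G"
    unfolding equipment_def by blast
  show "E \<subseteq> carrier G" by (rule S(3))
  fix g h assume g: "g \<in> E" and h: "h \<in> carrier G"
  then obtain x a where xa: "x \<in> S" "a \<in> carrier G" "g = inv a \<otimes> x \<otimes> a"
    using S(2) unfolding conj_class_def by blast
  have xc: "x \<in> carrier G" using xa S(1) by blast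
  have "inv h \<otimes> g \<otimes> h = inv (a \<otimes> h) \<otimes> x \<otimes> (a \<otimes> h)"
    using xa h xc by (simp add: inv_mult_group m_assoc)
  then have "inv h \<otimes> g \<otimes> h \<in> conj_class G x"
    unfolding conj_class_def using xa h by blast
  then show "inv h \<otimes> g \<otimes> h \<in> E" using S(2) xa by blast
qed

locale eqp_pair = A: eqp G E + B: eqp G E' for G :: "('a,'b) monoid_scheme" (structure) and E E' +
  assumes sub: "E' \<subseteq> E" and gen: "generate G E' = carrier G"
begin

definition hphi where "hphi Q = hrel G E `` Q"

lemma BW_AW: "w \<in> lists (E' \<times> (UNIV::bool set)) \<Longrightarrow> w \<in> lists (E \<times> (UNIV::bool set))"
  using sub by auto

lemma Rsub: "(u,v) \<in> hrel G E' \<Longrightarrow> (u,v) \<in> hrel G E"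
proof (induction rule: hrel.induct)
  case (hrefl w) then show ?case using BW_AW by (blast intro: hrel.hrefl)
next
  case (hctx u v a b) then show ?case using BW_AW by (blast intro: hrel.hctx)
next
  case (hcancel g e) then show ?case using sub by (blast intro: hrel.hcancel)
next
  case (hconj g h) then show ?case using sub by (blast intro: hrel.hconj)
qed (blast intro: hrel.intros)+

lemma phi_cls: "w \<in> lists (E' \<times> (UNIV::bool set)) \<Longrightarrow> hphi (B.cls w) = A.cls w"
proof -
  assume w: "w \<in> lists (E' \<times> (UNIV::bool set))"
  show ?thesis
  proof (intro equalityI subsetI)
    fix z assume "z \<in> hphi (B.cls w)"
    then obtain v where "(w,v) \<in> hrel G E'" "(v,z) \<in> hrel G E"
      unfolding hphi_def B.cls_def by blast
    then show "z \<in> A.cls w" unfolding A.cls_def using Rsub by (blast intro: hrel.htrans)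
  next
    fix z assume "z \<in> A.cls w"
    moreover have "w \<in> B.cls w" using w B.R_refl by (simp add: B.cls_def)
    ultimately show "z \<in> hphi (B.cls w)" unfolding hphi_def A.cls_def by blast
  qed
qed

lemma phi_hom: "group_hom (hatG G E') (hatG G E) hphi"
proof -
  have "hphi \<in> hom (hatG G E') (hatG G E)"
  proof (rule homI)
    fix x assume "x \<in> carrier (hatG G E')"
    then obtain w where "w \<in> lists (E' \<times> (UNIV::bool set))" "x = B.cls w" using B.carrier_cls by blast
    then show "hphi x \<in> carrier (hatG G E)" using phi_cls A.cls_carrier BW_AW by simp
  next
    fix x y assume "x \<in> carrier (hatG G E')" "y \<in> carrier (hatG G E')"
    then obtain u v where "u \<in> lists (E' \<times> (UNIV::bool set))" "x = B.cls u"
       "v \<in> lists (E' \<times> (UNIV::bool set))" "y = B.cls v" using B.carrier_cls by meson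
    then show "hphi (x \<otimes>\<^bsub>hatG G E'\<^esub> y) = hphi x \<otimes>\<^bsub>hatG G E\<^esub> hphi y"
      using phi_cls B.cls_mult A.cls_mult BW_AW by simp
  qed
  then show ?thesis
    unfolding group_hom_def group_hom_axioms_def using A.hat_group B.hat_group by blast
qed

lemma gen_words: "x \<in> generate G E' \<Longrightarrow> \<exists>w\<in>lists (E' \<times> (UNIV::bool set)). word_eval G w = x"
proof (induction rule: generate.induct)
  case one then show ?case by (intro bexI[of _ "[]"]) auto
next
  case (incl h)
  then have "h \<in> carrier G" using B.Esub by blast
  then show ?case using incl by (intro bexI[of _ "[(h,True)]"]) auto
next
  case (inv h)
  then have "h \<in> carrier G" using B.Esub by blast
  then show ?case using inv by (intro bexI[of _ "[(h,False)]"]) auto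
next
  case (eng h1 h2)
  then obtain w1 w2 where "w1 \<in> lists (E' \<times> (UNIV::bool set))" "word_eval G w1 = h1"
    "w2 \<in> lists (E' \<times> (UNIV::bool set))" "word_eval G w2 = h2" by blast
  then show ?case using B.W_carrier A.word_eval_append by (intro bexI[of _ "w1 @ w2"]) auto
qed

lemma decomp:
  assumes x: "x \<in> carrier (hatG G E)"
  shows "\<exists>k\<in>carrier (hatG G E'). \<exists>z\<in>carrier (hatG G E). x = hphi k \<otimes>\<^bsub>hatG G E\<^esub> z \<and>
     (\<forall>y\<in>carrier (hatG G E). z \<otimes>\<^bsub>hatG G E\<^esub> y = y \<otimes>\<^bsub>hatG G E\<^esub> z)"
proof -
  obtain w where w: "w \<in> lists (E \<times> (UNIV::bool set))" "x = A.cls w" using A.carrier_cls x by blast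
  have "word_eval G w \<in> generate G E'" using gen w A.W_carrier A.word_eval_closed by simp
  then obtain v where v: "v \<in> lists (E' \<times> (UNIV::bool set))" "word_eval G v = word_eval G w"
    using gen_words by blast
  have vA: "v \<in> lists (E \<times> (UNIV::bool set))" using v BW_AW by blast
  let ?t = "winv v @ w"
  have t: "?t \<in> lists (E \<times> (UNIV::bool set))" using A.winv_W vA w by simp
  have ev: "word_eval G ?t = \<one>" using A.eval_winv_app[OF vA w(1)] v by simp
  have "(v @ winv v @ w, [] @ [] @ w) \<in> hrel G E"
  proof -
    have "(winv (winv v) @ winv v, []) \<in> hrel G E" using A.winv_cancel A.winv_W vA by blast
    then have "([] @ (v @ winv v) @ w, [] @ [] @ w) \<in> hrel G E" using w
      by (intro hrel.hctx) auto
    then show ?thesis by simp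
  qed
  then have "A.cls (v @ ?t) = A.cls w" using A.cls_eq vA t by simp
  then have "x = hphi (B.cls v) \<otimes>\<^bsub>hatG G E\<^esub> A.cls ?t"
    using w phi_cls[OF v(1)] A.cls_mult vA t by simp
  moreover have "B.cls v \<in> carrier (hatG G E')" using v B.cls_carrier by blast
  moreover have "A.cls ?t \<in> carrier (hatG G E)" using t A.cls_carrier by blast
  ultimately show ?thesis using A.central_word[OF t ev] by blast
qed

lemma derived_set_sub:
  "derived_set (hatG G E) (carrier (hatG G E)) \<subseteq> derived_set (hatG G E) (hphi ` carrier (hatG G E'))"
proof
  interpret h: group_hom "hatG G E'" "hatG G E" hphi by (rule phi_hom)
  fix c assume "c \<in> derived_set (hatG G E) (carrier (hatG G E))"
  then obtain x1 x2 where xs: "x1 \<in> carrier (hatG G E)" "x2 \<in> carrier (hatG G E)"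
    "c = x1 \<otimes>\<^bsub>hatG G E\<^esub> x2 \<otimes>\<^bsub>hatG G E\<^esub> inv\<^bsub>hatG G E\<^esub> x1 \<otimes>\<^bsub>hatG G E\<^esub> inv\<^bsub>hatG G E\<^esub> x2" by blast
  obtain k1 z1 where 1: "k1 \<in> carrier (hatG G E')" "z1 \<in> carrier (hatG G E)" "x1 = hphi k1 \<otimes>\<^bsub>hatG G E\<^esub> z1"
     "\<forall>y\<in>carrier (hatG G E). z1 \<otimes>\<^bsub>hatG G E\<^esub> y = y \<otimes>\<^bsub>hatG G E\<^esub> z1"
    using decomp[OF xs(1)] by blast
  obtain k2 z2 where 2: "k2 \<in> carrier (hatG G E')" "z2 \<in> carrier (hatG G E)" "x2 = hphi k2 \<otimes>\<^bsub>hatG G E\<^esub> z2"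
     "\<forall>y\<in>carrier (hatG G E). z2 \<otimes>\<^bsub>hatG G E\<^esub> y = y \<otimes>\<^bsub>hatG G E\<^esub> z2"
    using decomp[OF xs(2)] by blast
  have p1: "hphi k1 \<in> carrier (hatG G E)" and p2: "hphi k2 \<in> carrier (hatG G E)" using 1 2 by auto
  have "c = hphi k1 \<otimes>\<^bsub>hatG G E\<^esub> x2 \<otimes>\<^bsub>hatG G E\<^esub> inv\<^bsub>hatG G E\<^esub> hphi k1 \<otimes>\<^bsub>hatG G E\<^esub> inv\<^bsub>hatG G E\<^esub> x2"
    using xs(3) 1 A.hat.comm_central[OF p1 xs(2) 1(2) 1(4)] by simp
  also have "\<dots> = hphi k1 \<otimes>\<^bsub>hatG G E\<^esub> hphi k2 \<otimes>\<^bsub>hatG G E\<^esub> inv\<^bsub>hatG G E\<^esub> hphi k1 \<otimes>\<^bsub>hatG G E\<^esub> inv\<^bsub>hatG G E\<^esub> hphi k2"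
    using 2 A.hat.comm_central2[OF p2 p1 2(2) 2(4)] by simp
  finally show "c \<in> derived_set (hatG G E) (hphi ` carrier (hatG G E'))" using 1 2 by blast
qed

lemma derived_sub:
  "derived (hatG G E) (carrier (hatG G E)) \<subseteq> hphi ` derived (hatG G E') (carrier (hatG G E'))"
proof -
  interpret h: group_hom "hatG G E'" "hatG G E" hphi by (rule phi_hom)
  have "derived (hatG G E) (carrier (hatG G E)) \<subseteq> derived (hatG G E) (hphi ` carrier (hatG G E'))"
    unfolding derived_def by (rule A.hat.mono_generate[OF derived_set_sub])
  also have "\<dots> = hphi ` derived (hatG G E') (carrier (hatG G E'))"
    by (rule h.derived_img) simp
  finally show ?thesis .
qed

lemma beta_phi: "Q \<in> carrier (hatG G E') \<Longrightarrow> hat_beta G (hphi Q) = hat_beta G Q"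
proof -
  assume "Q \<in> carrier (hatG G E')"
  then obtain w where w: "w \<in> lists (E' \<times> (UNIV::bool set))" "Q = B.cls w" using B.carrier_cls by blast
  then show ?thesis using phi_cls A.beta_cls B.beta_cls BW_AW by simp
qed

lemma S_sub:
  "hat_kernel G E \<inter> derived (hatG G E) (carrier (hatG G E)) \<subseteq>
   hphi ` (hat_kernel G E' \<inter> derived (hatG G E') (carrier (hatG G E')))"
proof
  fix Q0 assume X: "Q0 \<in> hat_kernel G E \<inter> derived (hatG G E) (carrier (hatG G E))"
  then obtain K where K: "K \<in> derived (hatG G E') (carrier (hatG G E'))" "Q0 = hphi K"
    using derived_sub by blast
  have Kc: "K \<in> carrier (hatG G E')" using K B.hat.derived_in_carrier by blast
  have "hat_beta G K = \<one>" using X K beta_phi[OF Kc] by (simp add: hat_kernel_def)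
  then have "K \<in> hat_kernel G E'" using Kc by (simp add: hat_kernel_def)
  then show "Q0 \<in> hphi ` (hat_kernel G E' \<inter> derived (hatG G E') (carrier (hatG G E')))" using K by blast
qed

end

lemma (in eqp) one_in_S:
  "\<one>\<^bsub>hatG G E\<^esub> \<in> hat_kernel G E \<inter> derived (hatG G E) (carrier (hatG G E))"
proof -
  have "\<one>\<^bsub>hatG G E\<^esub> \<in> derived (hatG G E) (carrier (hatG G E))"
    using hat.derived_is_subgroup[of "carrier (hatG G E)"] subgroup.one_closed by blast
  moreover have "hat_beta G (\<one>\<^bsub>hatG G E\<^esub>) = \<one>" using beta_cls[of "[]"] cls_one by simp
  ultimately show ?thesis by (simp add: hat_kernel_def)
qed

theorem corollary2p20:
  fixes G :: "('a, 'b) monoid_scheme" and E E' :: "'a set"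
  assumes "group G"
    and "equipment G E" and "equipment G E'" and "E' \<subseteq> E"
    and "finite E"
    and "generate G E' = carrier G"
  shows "ambiguity_index G E \<le> ambiguity_index G E'
         \<and> (ambiguity_index G E' = 1 \<longrightarrow> ambiguity_index G E = 1)"
proof -
  interpret A: eqp G E using group.equipment_eqp[OF assms(1,2)] .
  interpret B: eqp G E' using group.equipment_eqp[OF assms(1,3)] .
  interpret P: eqp_pair G E E' by (unfold_locales) (use assms in auto)
  define S where "S = hat_kernel G E \<inter> derived (hatG G E) (carrier (hatG G E))"
  define S' where "S' = hat_kernel G E' \<inter> derived (hatG G E') (carrier (hatG G E'))"
  have sub: "S \<subseteq> P.hphi ` S'" unfolding S_def S'_def by (rule P.S_sub)
  have ne: "S \<noteq> {}" using A.one_in_S unfolding S_def by blast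
  have le: "ambiguity_index G E \<le> ambiguity_index G E'"
  proof (cases "finite S'")
    case True
    then have fS: "finite S" using sub finite_surj by blast
    have "card S \<le> card S'" using card_mono[OF finite_imageI[OF True] sub] card_image_le[OF True, of P.hphi] by linarith
    then show ?thesis using True fS unfolding ambiguity_index_def S_def[symmetric] S'_def[symmetric] Let_def
      by simp
  next
    case False
    then show ?thesis unfolding ambiguity_index_def S'_def[symmetric] Let_def by simp
  qed
  moreover have "ambiguity_index G E' = 1 \<longrightarrow> ambiguity_index G E = 1"
  proof
    assume a1: "ambiguity_index G E' = 1"
    then have "ambiguity_index G E \<le> 1" using le by simp
    moreover have "finite S"
    proof (rule ccontr)
      assume "\<not> finite S"
      then have "ambiguity_index G E = \<infinity>" unfolding ambiguity_index_def S_def[symmetric] Let_def by simp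
      then show False using \<open>ambiguity_index G E \<le> 1\<close> by simp
    qed
    moreover have "card S \<noteq> 0" using \<open>finite S\<close> ne by simp
    ultimately have "card S \<le> 1" "card S \<noteq> 0"
      unfolding ambiguity_index_def S_def[symmetric] Let_def
      by (simp_all add: one_enat_def)
    then have "card S = 1" by arith
    then show "ambiguity_index G E = 1"
      unfolding ambiguity_index_def S_def[symmetric] Let_def using \<open>finite S\<close>
      by (simp add: one_enat_def)
  qed
  ultimately show ?thesis by blast
qed

end
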